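(* Let $(\Sigma,T)$ be a finite convergent length-reducing rewriting system such that $\Sigma=\Sigma^{-1}$ and $(\Sigma,T)$ presents a group $G$. Let $\Gamma$ denote the undirected Cayley graph of $G$ with respect to $\Sigma$. Then (1) $\Gamma$ is geodetic; and (2) if $u_0,u_1,\dots,u_{m-1},u_m=u_0$ is an isometrically embedded circuit in $\Gamma$ of length $m>2$, then $m=2n+1$ for some positive integer $n$ and $(x_1\cdots x_{n+1},\,x_m^{-1}\cdots x_{n+2}^{-1})\in T$, where for $1\le i\le m$, $x_i\in\Sigma$ is a letter with $x_i=_G u_{i-1}^{-1}u_i$.
   Context: A rewriting system $(\Sigma,T)$ has alphabet $\Sigma$ and rules $T\subseteq\Sigma^*\times\Sigma^*$, inducing rewrites $u\ell v\to urv$ for $(\ell,r)\in T$; the group presented is $\Sigma^*$ modulo the equivalence generated by $\to$. Finite: $\Sigma,T$ finite; length-reducing: $|\ell|>|r|$ for all rules; convergent: terminating (no infinite rewrite sequences) and confluent (any two words reachable by rewriting from a common word can be rewritten to a common word). $\Sigma=\Sigma^{-1}$ means for each letter $x$ there is a letter $x^{-1}\in\Sigma$ representing its inverse in $G$. The undirected Cayley graph $\Gamma(G,\Sigma)$ has vertex set $G$, distinct $g,h$ adjacent iff $g^{-1}h$ is represented by an element of $\Sigma\cup\Sigma^{-1}$. A graph is geodetic if between any two vertices there is a unique shortest path; $d$ is the path metric. A path $u_0,\dots,u_m$ is an embedded circuit of length $m$ if $u_0,\dots,u_{m-1}$ are distinct and $u_0=u_m$; it is isometrically embedded if $d(u_i,u_j)=\min\{j-i,m+i-j\}$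 for all $0\le i<j<m$. *)

theory Defs
  imports Main
begin

definition rstep :: "('a list \<times> 'a list) set \<Rightarrow> ('a list \<times> 'a list) set" where
  "rstep T = {(u @ l @ v, u @ r @ v) | u l r v. (l, r) \<in> T}"

definition length_reducing :: "('a list \<times> 'a list) set \<Rightarrow> bool" where
  "length_reducing T \<longleftrightarrow> (\<forall>(l, r) \<in> T. length r < length l)"

definition terminating :: "'a set \<Rightarrow> ('a list \<times> 'a list) set \<Rightarrow> bool" where
  "terminating \<Sigma> T \<longleftrightarrow>
     \<not> (\<exists>f :: nat \<Rightarrow> 'a list. f 0 \<in> lists \<Sigma> \<and> (\<forall>i. (f i, f (Suc i)) \<in> rstep T))"

definition confluent :: "'a set \<Rightarrow> ('a list \<times> 'a list) set \<Rightarrow> bool" where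
  "confluent \<Sigma> T \<longleftrightarrow>
     (\<forall>w \<in> lists \<Sigma>. \<forall>a b. (w, a) \<in> (rstep T)\<^sup>* \<and> (w, b) \<in> (rstep T)\<^sup>* \<longrightarrow>
        (\<exists>c. (a, c) \<in> (rstep T)\<^sup>* \<and> (b, c) \<in> (rstep T)\<^sup>*))"

definition convergent :: "'a set \<Rightarrow> ('a list \<times> 'a list) set \<Rightarrow> bool" where
  "convergent \<Sigma> T \<longleftrightarrow> terminating \<Sigma> T \<and> confluent \<Sigma> T"

definition finite_rs :: "'a set \<Rightarrow> ('a list \<times> 'a list) set \<Rightarrow> bool" where
  "finite_rs \<Sigma> T \<longleftrightarrow> finite \<Sigma> \<and> finite T \<and> T \<subseteq> lists \<Sigma> \<times> lists \<Sigma>"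

text \<open>The equivalence generated by rewriting; elements of the presented group G
  are its classes of words over \<Sigma>.\<close>
definition req :: "('a list \<times> 'a list) set \<Rightarrow> ('a list \<times> 'a list) set" where
  "req T = (rstep T \<union> (rstep T)\<inverse>)\<^sup>*"

definition cls :: "('a list \<times> 'a list) set \<Rightarrow> 'a list \<Rightarrow> 'a list set" where
  "cls T w = req T `` {w}"

definition grp :: "'a set \<Rightarrow> ('a list \<times> 'a list) set \<Rightarrow> 'a list set set" where
  "grp \<Sigma> T = lists \<Sigma> // req T"

text \<open>\<Sigma> = \<Sigma>^{-1}: every letter has a letter in \<Sigma> representing its inverse in G.\<close>
definition inv_closed :: "'a set \<Rightarrow> ('a list \<times> 'a list) set \<Rightarrow> bool" where
  "inv_closed \<Sigma> T \<longleftrightarrow>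
     (\<forall>x \<in> \<Sigma>. \<exists>y \<in> \<Sigma>. ([x, y], []) \<in> req T \<and> ([y, x], []) \<in> req T)"

definition cay_adj :: "'a set \<Rightarrow> ('a list \<times> 'a list) set \<Rightarrow> 'a list set \<Rightarrow> 'a list set \<Rightarrow> bool" where
  "cay_adj \<Sigma> T g h \<longleftrightarrow> g \<noteq> h \<and>
     (\<exists>w \<in> lists \<Sigma>. \<exists>x \<in> \<Sigma>.
        (g = cls T w \<and> h = cls T (w @ [x])) \<or> (h = cls T w \<and> g = cls T (w @ [x])))"

text \<open>A walk from g to h, given as the list of its vertices; its length is length p - 1.\<close>
definition is_walk :: "'v set \<Rightarrow> ('v \<Rightarrow> 'v \<Rightarrow> bool) \<Rightarrow> 'v list \<Rightarrow> 'v \<Rightarrow> 'v \<Rightarrow> bool" where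
  "is_walk V adj p g h \<longleftrightarrow> p \<noteq> [] \<and> set p \<subseteq> V \<and> hd p = g \<and> last p = h \<and>
     (\<forall>i. Suc i < length p \<longrightarrow> adj (p ! i) (p ! Suc i))"

definition gdist :: "'v set \<Rightarrow> ('v \<Rightarrow> 'v \<Rightarrow> bool) \<Rightarrow> 'v \<Rightarrow> 'v \<Rightarrow> nat" where
  "gdist V adj g h = (LEAST n. \<exists>p. is_walk V adj p g h \<and> length p = Suc n)"

definition geodetic :: "'v set \<Rightarrow> ('v \<Rightarrow> 'v \<Rightarrow> bool) \<Rightarrow> bool" where
  "geodetic V adj \<longleftrightarrow>
     (\<forall>g \<in> V. \<forall>h \<in> V. \<exists>!p. is_walk V adj p g h \<and> length p = Suc (gdist V adj g h))"

definition embedded_circuit :: "'v set \<Rightarrow> ('v \<Rightarrow> 'v \<Rightarrow> bool) \<Rightarrow> (nat \<Rightarrow> 'v) \<Rightarrow> nat \<Rightarrow> bool" where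
  "embedded_circuit V adj u m \<longleftrightarrow>
     (\<forall>i \<le> m. u i \<in> V) \<and> (\<forall>i < m. adj (u i) (u (Suc i))) \<and>
     inj_on u {..<m} \<and> u m = u 0"

definition isometric_circuit :: "'v set \<Rightarrow> ('v \<Rightarrow> 'v \<Rightarrow> bool) \<Rightarrow> (nat \<Rightarrow> 'v) \<Rightarrow> nat \<Rightarrow> bool" where
  "isometric_circuit V adj u m \<longleftrightarrow> embedded_circuit V adj u m \<and>
     (\<forall>i j. i < j \<and> j < m \<longrightarrow> gdist V adj (u i) (u j) = min (j - i) (m + i - j))"

end

theory Submission imports Defs begin

definition irr :: "('a list \<times> 'a list) set \<Rightarrow> 'a list \<Rightarrow> bool" where
  "irr T w \<longleftrightarrow> (\<forall>v. (w, v) \<notin> rstep T)"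

lemma rstep_ctx: "(a, b) \<in> rstep T \<Longrightarrow> (c @ a @ d, c @ b @ d) \<in> rstep T"
  unfolding rstep_def by auto (metis append.assoc)

lemma req_refl: "(a, a) \<in> req T" unfolding req_def by simp

lemma req_sym: "(a, b) \<in> req T \<Longrightarrow> (b, a) \<in> req T"
  unfolding req_def
  by (metis (no_types, lifting) converse_Un converse_converse rtrancl_converseI sup_commute)

lemma req_trans: "(a, b) \<in> req T \<Longrightarrow> (b, c) \<in> req T \<Longrightarrow> (a, c) \<in> req T"
  unfolding req_def by (rule rtrancl_trans)

lemma rtr_req: "(a, b) \<in> (rstep T)\<^sup>* \<Longrightarrow> (a, b) \<in> req T"
  unfolding req_def by (meson in_rtrancl_UnI)

lemma req_ctx: "(a, b) \<in> req T \<Longrightarrow> (c @ a @ d, c @ b @ d) \<in> req T"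
  unfolding req_def
proof (induction rule: rtrancl_induct)
  case base then show ?case by simp
next
  case (step y z)
  from step(2) have "(c @ y @ d, c @ z @ d) \<in> rstep T \<union> (rstep T)\<inverse>"
    using rstep_ctx[of y z T c d] rstep_ctx[of z y T c d] by blast
  with step(3) show ?case by (rule rtrancl_into_rtrancl)
qed

lemma cls_eq: "cls T a = cls T b \<longleftrightarrow> (a, b) \<in> req T"
proof
  assume "cls T a = cls T b"
  then have "b \<in> cls T a" using req_refl unfolding cls_def by fastforce
  then show "(a, b) \<in> req T" unfolding cls_def by simp
next
  assume h: "(a, b) \<in> req T"
  show "cls T a = cls T b" unfolding cls_def
    using h req_sym req_trans by blast
qed

lemma irr_nil: "length_reducing T \<Longrightarrow> irr T []"
  unfolding irr_def rstep_def length_reducing_def by fastforce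

lemma irr_factor: "irr T (u @ w @ v) \<Longrightarrow> irr T w"
  unfolding irr_def using rstep_ctx by blast

lemma rstep_len: "length_reducing T \<Longrightarrow> (a, b) \<in> rstep T \<Longrightarrow> length b < length a"
  unfolding rstep_def length_reducing_def by fastforce

lemma rtr_len: assumes lr: "length_reducing T" shows "(a, b) \<in> (rstep T)\<^sup>* \<Longrightarrow> a \<noteq> b \<Longrightarrow> length b < length a"
proof (induction rule: converse_rtrancl_induct)
  case base then show ?case by simp
next
  case (step y z)
  then show ?case using rstep_len[OF lr step(1)]
    by (cases "z = b") auto
qed

lemma rtr_irr: "(a, b) \<in> (rstep T)\<^sup>* \<Longrightarrow> irr T a \<Longrightarrow> b = a"
  unfolding irr_def by (metis converse_rtranclE)

lemma nf_exists: "length_reducing T \<Longrightarrow> \<exists>N. (a, N) \<in> (rstep T)\<^sup>* \<and> irr T N"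
proof (induction "length a" arbitrary: a rule: less_induct)
  case less
  show ?case
  proof (cases "irr T a")
    case True then show ?thesis by blast
  next
    case False
    then obtain b where b: "(a, b) \<in> rstep T" unfolding irr_def by blast
    then have "length b < length a" using rstep_len less(2) by blast
    then obtain N where "(b, N) \<in> (rstep T)\<^sup>*" "irr T N" using less by blast
    then show ?thesis using b by (meson converse_rtrancl_into_rtrancl)
  qed
qed

locale rs =
  fixes S :: "'a set" and T :: "('a list \<times> 'a list) set"
  assumes TS: "T \<subseteq> lists S \<times> lists S"
    and conf: "confluent S T"
    and lr: "length_reducing T"
    and ic: "inv_closed S T"
begin

lemma rstep_lists: assumes ab: "(a, b) \<in> rstep T" shows "(a \<in> lists S \<longleftrightarrow> b \<in> lists S)"
proof -
  have "\<And>l r. (l, r) \<in> T \<Longrightarrow> l \<in> lists S \<and> r \<in> lists S" using TS by blast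
  then show ?thesis using ab unfolding rstep_def by fastforce
qed

lemma req_lists: "(a, b) \<in> req T \<Longrightarrow> a \<in> lists S \<Longrightarrow> b \<in> lists S"
  unfolding req_def
proof (induction rule: rtrancl_induct)
  case base then show ?case by simp
next
  case (step y z) then show ?case using rstep_lists by blast
qed

lemma CR0: "(a, b) \<in> (rstep T \<union> (rstep T)\<inverse>)\<^sup>* \<Longrightarrow> a \<in> lists S \<Longrightarrow> \<exists>c. (a, c) \<in> (rstep T)\<^sup>* \<and> (b, c) \<in> (rstep T)\<^sup>*"
proof (induction rule: rtrancl_induct)
  case base then show ?case by blast
next
  case (step y z)
  then obtain c where c: "(a, c) \<in> (rstep T)\<^sup>*" "(y, c) \<in> (rstep T)\<^sup>*" by blast
  have yS: "y \<in> lists S" using req_lists[of a y] step unfolding req_def by blast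
  show ?case
  proof (cases "(y, z) \<in> rstep T")
    case True
    then obtain d where "(z, d) \<in> (rstep T)\<^sup>*" "(c, d) \<in> (rstep T)\<^sup>*"
      using conf yS c(2) unfolding confluent_def by blast
    then show ?thesis using c(1) by (meson rtrancl_trans)
  next
    case False
    then have "(z, y) \<in> rstep T" using step(2) by blast
    then show ?thesis using c by (meson converse_rtrancl_into_rtrancl)
  qed
qed

lemma CR: "(a, b) \<in> req T \<Longrightarrow> a \<in> lists S \<Longrightarrow> \<exists>c. (a, c) \<in> (rstep T)\<^sup>* \<and> (b, c) \<in> (rstep T)\<^sup>*"
  unfolding req_def by (rule CR0)

lemma nf_unique: "a \<in> lists S \<Longrightarrow> irr T a \<Longrightarrow> irr T b \<Longrightarrow> (a, b) \<in> req T \<Longrightarrow> a = b"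
  using CR rtr_irr by metis

lemma min_irr:
  assumes "a \<in> lists S" "(a, b) \<in> req T" "irr T b"
  shows "length b \<le> length a \<and> (length a = length b \<longrightarrow> a = b)"
proof -
  obtain N where N: "(a, N) \<in> (rstep T)\<^sup>*" "irr T N" using nf_exists lr by blast
  have NS: "N \<in> lists S" using req_lists[OF rtr_req[OF N(1)] assms(1)] .
  have "(N, b) \<in> req T" using req_sym[OF rtr_req[OF N(1)]] assms(2) req_trans by blast
  then have "N = b" using nf_unique NS N(2) assms(3) by blast
  then show ?thesis using rtr_len[OF lr N(1)] by (cases "a = b") auto
qed

lemma inv_word: "w \<in> lists S \<Longrightarrow> \<exists>v \<in> lists S. (v @ w, []) \<in> req T \<and> (w @ v, []) \<in> req T"
proof (induction w)
  case Nil then show ?case using req_refl by fastforce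
next
  case (Cons a w)
  then obtain v where v: "v \<in> lists S" "(v @ w, []) \<in> req T" "(w @ v, []) \<in> req T" by auto
  obtain y where y: "y \<in> S" "([a, y], []) \<in> req T" "([y, a], []) \<in> req T"
    using ic Cons(2) unfolding inv_closed_def by auto
  have "(v @ [y, a] @ w, v @ [] @ w) \<in> req T" using req_ctx[OF y(3)] .
  then have 1: "((v @ [y]) @ a # w, []) \<in> req T" using v(2) req_trans by fastforce
  have "([] @ (w @ v) @ [y], [] @ [] @ [y]) \<in> req T" using req_ctx[OF v(3)] .
  then have "([a] @ (w @ v @ [y]) @ [], [a] @ [y] @ []) \<in> req T" using req_ctx by fastforce
  then have 2: "((a # w) @ v @ [y], []) \<in> req T" using y(2) req_trans by fastforce
  show ?case using 1 2 v(1) y(1) by (intro bexI[of _ "v @ [y]"]) auto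
qed

lemma left_cancel:
  assumes "w \<in> lists S" "(w @ a, w @ b) \<in> req T" shows "(a, b) \<in> req T"
proof -
  obtain v where v: "(v @ w, []) \<in> req T" using inv_word assms(1) by blast
  have "(v @ (w @ a) @ [], v @ (w @ b) @ []) \<in> req T" using req_ctx[OF assms(2)] .
  then have 1: "((v @ w) @ a, (v @ w) @ b) \<in> req T" by simp
  have 2: "([] @ (v @ w) @ a, [] @ [] @ a) \<in> req T" using req_ctx[OF v] .
  have 3: "([] @ (v @ w) @ b, [] @ [] @ b) \<in> req T" using req_ctx[OF v] .
  have h2: "((v @ w) @ a, a) \<in> req T" using 2 by simp
  have h3: "((v @ w) @ b, b) \<in> req T" using 3 by simp
  show ?thesis using req_trans[OF req_sym[OF h2] req_trans[OF 1 h3]] .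
qed

lemma cls_in: "w \<in> lists S \<Longrightarrow> cls T w \<in> grp S T"
  unfolding grp_def cls_def quotient_def by blast

lemma grp_elem: "g \<in> grp S T \<Longrightarrow> \<exists>w \<in> lists S. g = cls T w"
  unfolding grp_def cls_def quotient_def by blast

lemma adj_sym: "cay_adj S T g h \<Longrightarrow> cay_adj S T h g"
  unfolding cay_adj_def by blast

lemma adj_step:
  assumes "cay_adj S T g h" "g = cls T w0" "w0 \<in> lists S"
  shows "\<exists>a \<in> S. h = cls T (w0 @ [a])"
proof -
  obtain w x where wx: "w \<in> lists S" "x \<in> S"
    "(g = cls T w \<and> h = cls T (w @ [x])) \<or> (h = cls T w \<and> g = cls T (w @ [x]))"
    using assms(1) unfolding cay_adj_def by blast
  from wx(3) show ?thesis
  proof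
    assume h: "g = cls T w \<and> h = cls T (w @ [x])"
    then have "(w0, w) \<in> req T" using assms(2) cls_eq by metis
    then have "([] @ w0 @ [x], [] @ w @ [x]) \<in> req T" by (rule req_ctx)
    then show ?thesis using h wx(2) cls_eq by (metis append_Nil)
  next
    assume h: "h = cls T w \<and> g = cls T (w @ [x])"
    obtain y where y: "y \<in> S" "([x, y], []) \<in> req T"
      using ic wx(2) unfolding inv_closed_def by auto
    have "(w0, w @ [x]) \<in> req T" using h assms(2) cls_eq by metis
    then have 1: "([] @ w0 @ [y], [] @ (w @ [x]) @ [y]) \<in> req T" by (rule req_ctx)
    have 2: "(w @ [x, y] @ [], w @ [] @ []) \<in> req T" using req_ctx[OF y(2)] .
    have "(w0 @ [y], w) \<in> req T" using 1 2 req_trans by fastforce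
    then show ?thesis using h y(1) cls_eq by metis
  qed
qed

lemma walk_word:
  "p \<noteq> [] \<Longrightarrow> hd p = cls T w0 \<Longrightarrow> w0 \<in> lists S \<Longrightarrow>
   (\<forall>i. Suc i < length p \<longrightarrow> cay_adj S T (p ! i) (p ! Suc i)) \<Longrightarrow>
   \<exists>z \<in> lists S. length z = length p - 1 \<and> (\<forall>i < length p. p ! i = cls T (w0 @ take i z))"
proof (induction p arbitrary: w0)
  case Nil then show ?case by simp
next
  case (Cons g p)
  show ?case
  proof (cases "p = []")
    case True
    then show ?thesis using Cons(3) by (intro bexI[of _ "[]"]) auto
  next
    case False
    have "cay_adj S T g (hd p)" using Cons(5)[rule_format, of 0] False
      by (simp add: hd_conv_nth)
    then obtain a where a: "a \<in> S" "hd p = cls T (w0 @ [a])"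
      using adj_step Cons(3,4) by fastforce
    have "\<forall>i. Suc i < length p \<longrightarrow> cay_adj S T (p ! i) (p ! Suc i)"
      using Cons(5) by fastforce
    then obtain z where z: "z \<in> lists S" "length z = length p - 1"
      "\<forall>i < length p. p ! i = cls T ((w0 @ [a]) @ take i z)"
      using Cons(1)[OF False a(2)] Cons(4) a(1) by auto
    show ?thesis
    proof (intro bexI[of _ "a # z"] conjI allI impI)
      show "a # z \<in> lists S" using a z by auto
      show "length (a # z) = length (g # p) - 1" using z False by auto
      fix i assume i: "i < length (g # p)"
      show "(g # p) ! i = cls T (w0 @ take i (a # z))"
      proof (cases i)
        case 0 then show ?thesis using Cons(3) by simp
      next
        case (Suc j) then show ?thesis using z(3) i by simp
      qed
    qed
  qed
qed

definition cw :: "'a list \<Rightarrow> 'a list \<Rightarrow> 'a list set list" where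
  "cw w0 N = map (\<lambda>i. cls T (w0 @ take i N)) [0..<Suc (length N)]"

lemma canon_walk:
  assumes "w0 \<in> lists S" "N \<in> lists S" "irr T N"
  shows "is_walk (grp S T) (cay_adj S T) (cw w0 N) (cls T w0) (cls T (w0 @ N))"
  unfolding is_walk_def
proof (intro conjI allI impI)
  show "cw w0 N \<noteq> []" unfolding cw_def by simp
  have tS: "\<And>i. w0 @ take i N \<in> lists S" using assms(1,2)
    by (metis append_in_lists_conv append_take_drop_id)
  show "set (cw w0 N) \<subseteq> grp S T" unfolding cw_def set_map by (rule image_subsetI, rule cls_in, rule tS)
  show "hd (cw w0 N) = cls T w0" unfolding cw_def by (simp add: upt_conv_Cons del: upt_Suc)
  show "last (cw w0 N) = cls T (w0 @ N)" unfolding cw_def by simp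
  fix i assume i: "Suc i < length (cw w0 N)"
  then have iN: "i < length N" unfolding cw_def by simp
  have tk: "take (Suc i) N = take i N @ [N ! i]" using iN by (simp add: take_Suc_conv_app_nth)
  have e1: "cw w0 N ! i = cls T (w0 @ take i N)" unfolding cw_def using iN
    by (simp del: upt_Suc)
  have e2: "cw w0 N ! Suc i = cls T ((w0 @ take i N) @ [N ! i])" unfolding cw_def using iN tk
    by (simp del: upt_Suc)
  have wS: "w0 @ take i N \<in> lists S" using tS .
  have NiS: "N ! i \<in> S" using assms(2) iN nth_mem by blast
  have ne: "cls T (w0 @ take i N) \<noteq> cls T ((w0 @ take i N) @ [N ! i])"
  proof
    assume "cls T (w0 @ take i N) = cls T ((w0 @ take i N) @ [N ! i])"
    then have "(w0 @ take i N, (w0 @ take i N) @ [N ! i]) \<in> req T" by (simp only: cls_eq)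
    then have "((w0 @ take i N) @ [], (w0 @ take i N) @ [N ! i]) \<in> req T" by (simp only: append_Nil2)
    then have r: "([], [N ! i]) \<in> req T" using left_cancel wS by blast
    have "irr T [N ! i]" using irr_factor[of T "take i N" "[N ! i]" "drop (Suc i) N"]
      assms(3) id_take_nth_drop[OF iN] by simp
    then show False using nf_unique[OF _ irr_nil[OF lr] _ r] by simp
  qed
  show "cay_adj S T (cw w0 N ! i) (cw w0 N ! Suc i)"
    unfolding cay_adj_def e1 e2 using ne wS NiS by blast
qed

lemma walk_len:
  assumes "is_walk V (cay_adj S T) p (cls T w0) (cls T (w0 @ z))" "w0 \<in> lists S" "z \<in> lists S"
    "(z, N) \<in> req T" "irr T N"
  shows "length N \<le> length p - 1 \<and> (length p - 1 = length N \<longrightarrow> p = cw w0 N)"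
proof -
  obtain z' where z': "z' \<in> lists S" "length z' = length p - 1"
    "\<forall>i < length p. p ! i = cls T (w0 @ take i z')"
    using walk_word[of p w0] assms(1,2) unfolding is_walk_def by blast
  have pne: "p \<noteq> []" using assms(1) unfolding is_walk_def by simp
  have "last p = cls T (w0 @ z')" using z'(2,3) pne by (simp add: last_conv_nth)
  then have "cls T (w0 @ z') = cls T (w0 @ z)" using assms(1) unfolding is_walk_def by simp
  then have "(w0 @ z', w0 @ z) \<in> req T" using cls_eq by blast
  then have "(z', z) \<in> req T" using left_cancel assms(2) by blast
  then have zN: "(z', N) \<in> req T" using assms(4) req_trans by blast
  have m: "length N \<le> length z' \<and> (length z' = length N \<longrightarrow> z' = N)"
    using min_irr[OF z'(1) zN assms(5)] .
  show ?thesis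
  proof (intro conjI impI)
    show "length N \<le> length p - 1" using m z'(2) by simp
    assume "length p - 1 = length N"
    then have eq: "z' = N" "length p = Suc (length N)" using m z'(2) pne by (auto simp: neq_Nil_conv)
    show "p = cw w0 N"
      by (rule nth_equalityI) (use eq z'(3) in \<open>auto simp: cw_def simp del: upt_Suc\<close>)
  qed
qed

lemma gdist_eq:
  assumes "w0 \<in> lists S" "z \<in> lists S" "(z, N) \<in> (rstep T)\<^sup>*" "irr T N"
  shows "gdist (grp S T) (cay_adj S T) (cls T w0) (cls T (w0 @ z)) = length N
    \<and> (\<forall>p. is_walk (grp S T) (cay_adj S T) p (cls T w0) (cls T (w0 @ z)) \<and> length p = Suc (length N) \<longrightarrow> p = cw w0 N)
    \<and> is_walk (grp S T) (cay_adj S T) (cw w0 N) (cls T w0) (cls T (w0 @ z))"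
proof -
  have NS: "N \<in> lists S" using req_lists[OF rtr_req[OF assms(3)] assms(2)] .
  have zN: "(z, N) \<in> req T" using rtr_req[OF assms(3)] .
  have "(w0 @ z @ [], w0 @ N @ []) \<in> req T" using req_ctx[OF zN] .
  then have ce: "cls T (w0 @ z) = cls T (w0 @ N)" by (simp only: cls_eq append_Nil2)
  have W: "is_walk (grp S T) (cay_adj S T) (cw w0 N) (cls T w0) (cls T (w0 @ z))"
    using canon_walk[OF assms(1) NS assms(4)] ce by simp
  have L: "length (cw w0 N) = Suc (length N)" unfolding cw_def by simp
  have "gdist (grp S T) (cay_adj S T) (cls T w0) (cls T (w0 @ z)) = length N"
    unfolding gdist_def
  proof (rule Least_equality)
    show "\<exists>p. is_walk (grp S T) (cay_adj S T) p (cls T w0) (cls T (w0 @ z)) \<and> length p = Suc (length N)"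
      using W L by blast
    fix k assume "\<exists>p. is_walk (grp S T) (cay_adj S T) p (cls T w0) (cls T (w0 @ z)) \<and> length p = Suc k"
    then show "length N \<le> k" using walk_len[OF _ assms(1,2) zN assms(4)] by fastforce
  qed
  moreover have "\<forall>p. is_walk (grp S T) (cay_adj S T) p (cls T w0) (cls T (w0 @ z)) \<and> length p = Suc (length N) \<longrightarrow> p = cw w0 N"
    using walk_len[OF _ assms(1,2) zN assms(4)] by fastforce
  ultimately show ?thesis using W by blast
qed

lemma geodetic: "geodetic (grp S T) (cay_adj S T)"
  unfolding geodetic_def
proof (intro ballI)
  fix g h assume g: "g \<in> grp S T" and h: "h \<in> grp S T"
  obtain w0 where w0: "w0 \<in> lists S" "g = cls T w0" using grp_elem g by blast
  obtain w1 where w1: "w1 \<in> lists S" "h = cls T w1" using grp_elem h by blast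
  obtain v where v: "v \<in> lists S" "(w0 @ v, []) \<in> req T" using inv_word w0(1) by blast
  have "((w0 @ v) @ w1, [] @ w1) \<in> req T" using req_ctx[of _ _ T "[]", OF v(2)] by simp
  then have hz: "h = cls T (w0 @ (v @ w1))" using w1 cls_eq by fastforce
  have zS: "v @ w1 \<in> lists S" using v w1 by simp
  obtain N where N: "(v @ w1, N) \<in> (rstep T)\<^sup>*" "irr T N" using nf_exists lr by blast
  note G = gdist_eq[OF w0(1) zS N]
  show "\<exists>!p. is_walk (grp S T) (cay_adj S T) p g h \<and> length p = Suc (gdist (grp S T) (cay_adj S T) g h)"
    unfolding w0(2) hz
    by (rule ex1I[of _ "cw w0 N"]) (use G in \<open>auto simp: cw_def\<close>)
qed

lemma irr_dist:
  assumes "w0 \<in> lists S" "z \<in> lists S"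
  shows "irr T z \<longleftrightarrow> gdist (grp S T) (cay_adj S T) (cls T w0) (cls T (w0 @ z)) = length z"
proof -
  obtain N where N: "(z, N) \<in> (rstep T)\<^sup>*" "irr T N" using nf_exists lr by blast
  note G = gdist_eq[OF assms N]
  show ?thesis
  proof
    assume "irr T z" then have "N = z" using rtr_irr N(1) by blast
    then show "gdist (grp S T) (cay_adj S T) (cls T w0) (cls T (w0 @ z)) = length z" using G by simp
  next
    assume "gdist (grp S T) (cay_adj S T) (cls T w0) (cls T (w0 @ z)) = length z"
    then have "length N = length z" using G by simp
    then have "z = N" using rtr_len[OF lr N(1)] by fastforce
    then show "irr T z" using N(2) by simp
  qed
qed


lemma red_lhs: "(l, r) \<in> T \<Longrightarrow> \<not> irr T (a @ l @ b)"
  unfolding irr_def rstep_def by blast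

end

theorem lemma9:
  fixes \<Sigma> :: "'a set" and T :: "('a list \<times> 'a list) set"
  assumes "finite_rs \<Sigma> T"
    and "convergent \<Sigma> T"
    and "length_reducing T"
    and "inv_closed \<Sigma> T"
  shows "geodetic (grp \<Sigma> T) (cay_adj \<Sigma> T) \<and>
         (\<forall>u m. isometric_circuit (grp \<Sigma> T) (cay_adj \<Sigma> T) u m \<and> m > 2 \<longrightarrow>
           (\<exists>n > 0. m = 2 * n + 1 \<and>
             (\<forall>(x :: nat \<Rightarrow> 'a) (y :: nat \<Rightarrow> 'a).
                (\<forall>i \<in> {1..m}. x i \<in> \<Sigma> \<and> y i \<in> \<Sigma> \<and>
                   (\<exists>w \<in> lists \<Sigma>. u (i - 1) = cls T w \<and> u i = cls T (w @ [x i])) \<and>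
                   ([x i, y i], []) \<in> req T \<and> ([y i, x i], []) \<in> req T)
                \<longrightarrow> (map x [1..<n + 2], map y (rev [n + 2..<m + 1])) \<in> T)))"
proof -
  interpret rs \<Sigma> T using assms unfolding finite_rs_def convergent_def
    by unfold_locales auto
  have G: "geodetic (grp \<Sigma> T) (cay_adj \<Sigma> T)" by (rule geodetic)
  have P2: "\<forall>u m. isometric_circuit (grp \<Sigma> T) (cay_adj \<Sigma> T) u m \<and> m > 2 \<longrightarrow>
           (\<exists>n > 0. m = 2 * n + 1 \<and>
             (\<forall>(x :: nat \<Rightarrow> 'a) (y :: nat \<Rightarrow> 'a).
                (\<forall>i \<in> {1..m}. x i \<in> \<Sigma> \<and> y i \<in> \<Sigma> \<and>
                   (\<exists>w \<in> lists \<Sigma>. u (i - 1) = cls T w \<and> u i = cls T (w @ [x i])) \<and>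
                   ([x i, y i], []) \<in> req T \<and> ([y i, x i], []) \<in> req T)
                \<longrightarrow> (map x [1..<n + 2], map y (rev [n + 2..<m + 1])) \<in> T))"
  proof (intro allI impI)
    fix u m assume H: "isometric_circuit (grp \<Sigma> T) (cay_adj \<Sigma> T) u m \<and> m > 2"
    define V where "V = grp \<Sigma> T"
    define A where "A = cay_adj \<Sigma> T"
    have m2: "m > 2" using H by simp
    have uV: "\<And>i. i \<le> m \<Longrightarrow> u i \<in> V" and uadj: "\<And>i. i < m \<Longrightarrow> A (u i) (u (Suc i))"
      and inj: "inj_on u {..<m}" and um: "u m = u 0"
      and dist: "\<And>i j. i < j \<Longrightarrow> j < m \<Longrightarrow> gdist V A (u i) (u j) = min (j - i) (m + i - j)"
      using H unfolding isometric_circuit_def embedded_circuit_def V_def A_def by auto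
    have "odd m"
    proof
      assume "even m"
      then obtain k where m: "m = 2 * k" by blast
      have k2: "k \<ge> 2" using m m2 by simp
      define p1 where "p1 = map u [0..<Suc k]"
      define p2 where "p2 = map (\<lambda>i. u (m - i)) [0..<Suc k]"
      have d: "gdist V A (u 0) (u k) = k" using dist[of 0 k] m k2 by simp
      have w1: "is_walk V A p1 (u 0) (u k)"
        unfolding is_walk_def p1_def
      proof (intro conjI allI impI)
        show "set (map u [0..<Suc k]) \<subseteq> V" using uV m by auto
        show "hd (map u [0..<Suc k]) = u 0" by (simp add: upt_conv_Cons del: upt_Suc)
        fix i assume "Suc i < length (map u [0..<Suc k])"
        then have "i < k" by simp
        then show "A (map u [0..<Suc k] ! i) (map u [0..<Suc k] ! Suc i)"
          using uadj[of i] m by (simp del: upt_Suc)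
      qed simp_all
      have w2: "is_walk V A p2 (u 0) (u k)"
        unfolding is_walk_def p2_def
      proof (intro conjI allI impI)
        show "set (map (\<lambda>i. u (m - i)) [0..<Suc k]) \<subseteq> V" using uV m by auto
        show "hd (map (\<lambda>i. u (m - i)) [0..<Suc k]) = u 0" using um by (simp add: upt_conv_Cons del: upt_Suc)
        show "last (map (\<lambda>i. u (m - i)) [0..<Suc k]) = u k" using m by simp
        fix i assume "Suc i < length (map (\<lambda>i. u (m - i)) [0..<Suc k])"
        then have i: "i < k" by simp
        have "A (u (m - Suc i)) (u (Suc (m - Suc i)))" using uadj[of "m - Suc i"] i m by simp
        moreover have "Suc (m - Suc i) = m - i" using i m by simp
        ultimately have "A (u (m - Suc i)) (u (m - i))" by simp
        then have "A (u (m - i)) (u (m - Suc i))" using adj_sym unfolding A_def by blast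
        then show "A (map (\<lambda>i. u (m - i)) [0..<Suc k] ! i) (map (\<lambda>i. u (m - i)) [0..<Suc k] ! Suc i)"
          using i by (simp del: upt_Suc)
      qed simp
      have l1: "length p1 = Suc (gdist V A (u 0) (u k))" using d by (simp add: p1_def)
      have l2: "length p2 = Suc (gdist V A (u 0) (u k))" using d by (simp add: p2_def)
      have GG: "\<forall>g\<in>V. \<forall>h\<in>V. \<exists>!p. is_walk V A p g h \<and> length p = Suc (gdist V A g h)"
        using G unfolding geodetic_def V_def A_def .
      have "u 0 \<in> V" "u k \<in> V" using uV m by auto
      then have "\<exists>!p. is_walk V A p (u 0) (u k) \<and> length p = Suc (gdist V A (u 0) (u k))"
        using GG by blast
      then have "p1 = p2" using w1 w2 l1 l2 by blast
      then have "p1 ! 1 = p2 ! 1" by simp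
      then have "u 1 = u (m - 1)" using k2 unfolding p1_def p2_def by (simp del: upt_Suc)
      then have "1 = m - 1" using inj_onD[OF inj] m2 by simp
      then show False using m2 by simp
    qed
    then obtain n where mn: "m = 2 * n + 1" by (rule oddE)
    have n0: "n > 0" using mn m2 by simp
    show "\<exists>n > 0. m = 2 * n + 1 \<and>
             (\<forall>(x :: nat \<Rightarrow> 'a) (y :: nat \<Rightarrow> 'a).
                (\<forall>i \<in> {1..m}. x i \<in> \<Sigma> \<and> y i \<in> \<Sigma> \<and>
                   (\<exists>w \<in> lists \<Sigma>. u (i - 1) = cls T w \<and> u i = cls T (w @ [x i])) \<and>
                   ([x i, y i], []) \<in> req T \<and> ([y i, x i], []) \<in> req T)
                \<longrightarrow> (map x [1..<n + 2], map y (rev [n + 2..<m + 1])) \<in> T)"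
    proof (intro exI[of _ n] conjI allI impI)
      show "n > 0" by (rule n0)
      show "m = 2 * n + 1" by (rule mn)
      fix x y :: "nat \<Rightarrow> 'a"
      assume X: "\<forall>i \<in> {1..m}. x i \<in> \<Sigma> \<and> y i \<in> \<Sigma> \<and>
                   (\<exists>w \<in> lists \<Sigma>. u (i - 1) = cls T w \<and> u i = cls T (w @ [x i])) \<and>
                   ([x i, y i], []) \<in> req T \<and> ([y i, x i], []) \<in> req T"
      have XSi: "\<And>i. i \<in> {1..m} \<Longrightarrow> x i \<in> \<Sigma> \<and> y i \<in> \<Sigma>" using X by blast
      have Xw: "\<And>i. i \<in> {1..m} \<Longrightarrow> \<exists>w \<in> lists \<Sigma>. u (i - 1) = cls T w \<and> u i = cls T (w @ [x i])"
        using X by blast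
      have Xr: "\<And>i. i \<in> {1..m} \<Longrightarrow> ([x i, y i], []) \<in> req T" using X by blast
      obtain w0 where w0: "w0 \<in> lists \<Sigma>" "u 0 = cls T w0" using grp_elem uV[of 0] unfolding V_def by blast
      have fwd: "i \<le> m \<Longrightarrow> u i = cls T (w0 @ map x [1..<Suc i])" for i
      proof (induction i)
        case 0 then show ?case using w0 by simp
      next
        case (Suc i)
        have si: "Suc i \<in> {1..m}" using Suc(2) by simp
        obtain w where w: "u i = cls T w" "u (Suc i) = cls T (w @ [x (Suc i)])"
          using Xw[OF si] by auto
        have "u i = cls T (w0 @ map x [1..<Suc i])" using Suc by simp
        then have "cls T (w0 @ map x [1..<Suc i]) = cls T w" using w(1) by simp
        then have "(w0 @ map x [1..<Suc i], w) \<in> req T" by (simp only: cls_eq)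
        then have "([] @ (w0 @ map x [1..<Suc i]) @ [x (Suc i)], [] @ w @ [x (Suc i)]) \<in> req T"
          by (rule req_ctx)
        then have "((w0 @ map x [1..<Suc i]) @ [x (Suc i)], w @ [x (Suc i)]) \<in> req T" by simp
        then have c1: "cls T ((w0 @ map x [1..<Suc i]) @ [x (Suc i)]) = cls T (w @ [x (Suc i)])"
          by (simp only: cls_eq)
        have e: "w0 @ map x [1..<Suc (Suc i)] = (w0 @ map x [1..<Suc i]) @ [x (Suc i)]" by simp
        show ?case using w(2) c1 e by simp
      qed
      have bwd: "j \<le> m \<Longrightarrow> u (m - j) = cls T (w0 @ map y (rev [m - j + 1..<m + 1]))" for j
      proof (induction j)
        case 0 then show ?case using w0 um by simp
      next
        case (Suc j)
        define i where "i = m - j"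
        have i1: "i \<in> {1..m}" using Suc(2) i_def by auto
        obtain w where w: "u (i - 1) = cls T w" "u i = cls T (w @ [x i])"
          using Xw[OF i1] by blast
        have xy: "([x i, y i], []) \<in> req T" using Xr[OF i1] .
        have "u i = cls T (w0 @ map y (rev [i + 1..<m + 1]))" using Suc i_def by simp
        then have "cls T (w0 @ map y (rev [i + 1..<m + 1])) = cls T (w @ [x i])" using w(2) by simp
        then have "(w0 @ map y (rev [i + 1..<m + 1]), w @ [x i]) \<in> req T" by (simp only: cls_eq)
        then have a1: "([] @ (w0 @ map y (rev [i + 1..<m + 1])) @ [y i], [] @ (w @ [x i]) @ [y i]) \<in> req T"
          by (rule req_ctx)
        have a2: "(w @ [x i, y i] @ [], w @ [] @ []) \<in> req T" using req_ctx[OF xy] .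
        have "(w0 @ map y (rev [i + 1..<m + 1]) @ [y i], w) \<in> req T"
          using req_trans[OF a1[simplified] a2[simplified]] by simp
        then have c1: "cls T (w0 @ map y (rev [i + 1..<m + 1]) @ [y i]) = cls T w" by (simp only: cls_eq)
        have "m - Suc j + 1 = i" using i_def Suc(2) by simp
        then have "[m - Suc j + 1..<m + 1] = i # [i + 1..<m + 1]" using i1 by (simp add: upt_conv_Cons del: upt_Suc)
        then have e: "map y (rev [m - Suc j + 1..<m + 1]) = map y (rev [i + 1..<m + 1]) @ [y i]" by simp
        have "m - Suc j = i - 1" using i_def by simp
        then show ?case using w(1) c1 e by simp
      qed
      define X where "X = map x [1..<n + 2]"
      define Y where "Y = map y (rev [n + 2..<m + 1])"
      define P where "P = map x [1..<n + 1]"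
      define Q where "Q = map x [2..<n + 2]"
      have XS: "X \<in> lists \<Sigma>" unfolding X_def using XSi mn by auto
      have YS: "Y \<in> lists \<Sigma>" unfolding Y_def using XSi mn by auto
      have PS: "P \<in> lists \<Sigma>" unfolding P_def using XSi mn by auto
      have QS: "Q \<in> lists \<Sigma>" unfolding Q_def using XSi mn by auto
      have x1S: "x 1 \<in> \<Sigma>" using XSi mn by auto
      have XP: "X = P @ [x (Suc n)]" unfolding X_def P_def by simp
      have XQ: "X = x 1 # Q" unfolding X_def Q_def by (simp add: upt_conv_Cons numeral_2_eq_2 del: upt_Suc)
      have uX: "u (n + 1) = cls T (w0 @ X)" using fwd[of "n + 1"] mn unfolding X_def by simp
      have uP: "u n = cls T (w0 @ P)" using fwd[of n] mn unfolding P_def by simp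
      have u1: "u 1 = cls T ((w0 @ [x 1]))" using fwd[of 1] mn by simp
      have uQ: "u (n + 1) = cls T ((w0 @ [x 1]) @ Q)" using uX XQ by simp
      have uY: "u (n + 1) = cls T (w0 @ Y)" using bwd[of n] mn unfolding Y_def
        by (simp add: numeral_2_eq_2)
      have dX: "gdist (grp \<Sigma> T) (cay_adj \<Sigma> T) (cls T w0) (cls T (w0 @ X)) = n"
        using dist[of 0 "n + 1"] n0 mn w0(2) uX unfolding V_def A_def by simp
      have dP: "gdist (grp \<Sigma> T) (cay_adj \<Sigma> T) (cls T w0) (cls T (w0 @ P)) = n"
        using dist[of 0 n] n0 mn w0(2) uP unfolding V_def A_def by simp
      have dQ: "gdist (grp \<Sigma> T) (cay_adj \<Sigma> T) (cls T (w0 @ [x 1])) (cls T ((w0 @ [x 1]) @ Q)) = n"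
        using dist[of 1 "n + 1"] n0 mn u1 uQ unfolding V_def A_def by simp
      have dY: "gdist (grp \<Sigma> T) (cay_adj \<Sigma> T) (cls T w0) (cls T (w0 @ Y)) = n"
        using dX uX uY by simp
      have nX: "\<not> irr T X" using irr_dist[OF w0(1) XS] dX unfolding X_def by simp
      have iP: "irr T P" using irr_dist[OF w0(1) PS] dP unfolding P_def by simp
      have lQ: "length Q = n" unfolding Q_def by (simp del: upt_Suc)
      have iQ: "irr T Q" using irr_dist[of "w0 @ [x 1]" Q] w0(1) x1S QS dQ lQ by simp
      have lY: "length Y = n" unfolding Y_def using mn by (simp del: upt_Suc)
      have iY: "irr T Y" using irr_dist[OF w0(1) YS] dY lY by simp
      obtain a l r b where alb: "X = a @ l @ b" "(l, r) \<in> T"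
        using nX unfolding irr_def rstep_def by blast
      have a0: "a = []"
      proof (rule ccontr)
        assume "a \<noteq> []"
        then obtain c a' where ca: "a = c # a'" by (cases a) auto
        have "x 1 # Q = c # (a' @ l @ b)" using alb(1) XQ ca by simp
        then have "Q = a' @ l @ b" by simp
        then show False using iQ red_lhs[OF alb(2), of a' b] by simp
      qed
      have b0: "b = []"
      proof (rule ccontr)
        assume "b \<noteq> []"
        then obtain b' c where bc: "b = b' @ [c]" by (cases b rule: rev_cases) auto
        have "P @ [x (Suc n)] = (a @ l @ b') @ [c]" using alb(1) XP bc by simp
        then have "P = a @ l @ b'" by simp
        then show False using iP red_lhs[OF alb(2), of a b'] by simp
      qed
      have XT: "(X, r) \<in> T" using alb a0 b0 by simp
      have rS: "r \<in> lists \<Sigma>" using XT TS by blast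
      have "cls T (w0 @ X) = cls T (w0 @ Y)" using uX uY by simp
      then have "(w0 @ X, w0 @ Y) \<in> req T" by (simp only: cls_eq)
      then have XY: "(X, Y) \<in> req T" using left_cancel w0(1) by blast
      have "([] @ X @ [], [] @ r @ []) \<in> rstep T" unfolding rstep_def using XT by blast
      then have Xr: "(X, r) \<in> rstep T" by simp
      then have "(r, X) \<in> req T" using req_sym rtr_req by blast
      then have rY: "(r, Y) \<in> req T" using XY req_trans by blast
      have lr': "length r < length X" using rstep_len[OF lr Xr] .
      have "length X = n + 1" unfolding X_def by simp
      then have "r = Y" using min_irr[OF rS rY iY] lr' lY by simp
      then show "(map x [1..<n + 2], map y (rev [n + 2..<m + 1])) \<in> T"
        using XT unfolding X_def Y_def by simp
    qed
  qed
  show ?thesis using G P2 by blast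
qed

end
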